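(* There is an absolute constant $d$ such that the following holds. Let $N=A+B>0$ with integers $A\ge B\ge0$. Let $X\in\{0,1\}^N$ be chosen uniformly at random among all strings with exactly $A$ ones and $B$ zeros. Let $M$ be the (1-indexed) position of the $(\lfloor N/2\rfloor+1)$-st one in $X$ if $A>B$, and $M=N$ if $A=B$. Then for every $r\ge1$, $$\Pr_X\left[\,\left|M-\frac{N^2}{2A}\right|>d\sqrt{rN}\,\right]\le 2^{-r}.$$ *)

theory Defs
  imports "HOL-Probability.Probability"
begin

definition strings :: "nat \<Rightarrow> nat \<Rightarrow> bool list set" where
  "strings A B = {xs. length xs = A + B \<and> length (filter id xs) = A}"

definition one_positions :: "bool list \<Rightarrow> nat list" where
  "one_positions xs = map Suc (filter (\<lambda>i. xs ! i) [0..<length xs])"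

definition Mpos :: "nat \<Rightarrow> nat \<Rightarrow> bool list \<Rightarrow> nat" where
  "Mpos A B xs = (if A > B then one_positions xs ! ((A + B) div 2) else A + B)"

end

theory Submission
  imports Defs
begin

definition FS :: "nat \<Rightarrow> nat \<Rightarrow> nat set set" where
  "FS N A = {T. T \<subseteq> {..<N} \<and> card T = A}"

lemma finite_FS: "finite (FS N A)"
  unfolding FS_def by (rule finite_subset[of _ "Pow {..<N}"]) auto

lemma card_FS: "card (FS N A) = N choose A"
  unfolding FS_def using n_subsets[of "{..<N}" A] by simp

lemma card_FS_sup:
  assumes J: "J \<subseteq> {..<N}" and k: "card J \<le> A"
  shows "card {T\<in>FS N A. J \<subseteq> T} = (N - card J) choose (A - card J)"
proof -
  have fJ: "finite J" using J finite_subset by blast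
  have "bij_betw (\<lambda>T. T - J) {T\<in>FS N A. J \<subseteq> T} {U. U \<subseteq> {..<N} - J \<and> card U = A - card J}"
  proof (rule bij_betw_byWitness[where f' = "\<lambda>U. U \<union> J"])
    show "\<forall>a\<in>{T \<in> FS N A. J \<subseteq> T}. a - J \<union> J = a" by auto
    show "\<forall>a'\<in>{U. U \<subseteq> {..<N} - J \<and> card U = A - card J}. a' \<union> J - J = a'" by auto
    show "(\<lambda>T. T - J) ` {T \<in> FS N A. J \<subseteq> T} \<subseteq> {U. U \<subseteq> {..<N} - J \<and> card U = A - card J}"
      using fJ by (auto simp: FS_def card_Diff_subset)
    show "(\<lambda>U. U \<union> J) ` {U. U \<subseteq> {..<N} - J \<and> card U = A - card J} \<subseteq> {T \<in> FS N A. J \<subseteq> T}"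
    proof safe
      fix U assume U: "U \<subseteq> {..<N} - J" "card U = A - card J"
      have fU: "finite U" using U(1) finite_subset by blast
      have "card (U \<union> J) = card U + card J" using U fU fJ by (intro card_Un_disjoint) auto
      then show "U \<union> J \<in> FS N A" using U J k by (auto simp: FS_def)
    qed
  qed
  then have "card {T\<in>FS N A. J \<subseteq> T} = card {U. U \<subseteq> {..<N} - J \<and> card U = A - card J}"
    by (rule bij_betw_same_card)
  also have "\<dots> = card ({..<N} - J) choose (A - card J)" by (rule n_subsets) auto
  also have "card ({..<N} - J) = N - card J" using J fJ by (simp add: card_Diff_subset)
  finally show ?thesis .
qed

lemma binom_ratio:
  assumes "k \<le> A" "A \<le> N"
  shows "real ((N - k) choose (A - k)) * real N ^ k \<le> real (N choose A) * real A ^ k"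
  using assms
proof (induction k)
  case 0 then show ?case by simp
next
  case (Suc k)
  have IH: "real ((N - k) choose (A - k)) * real N ^ k \<le> real (N choose A) * real A ^ k"
    using Suc by simp
  obtain a n where a: "A - k = Suc a" and n: "N - k = Suc n" using Suc.prems
    by (metis Suc_diff_Suc Suc_le_lessD order_less_le_trans)
  have abs: "Suc a * (Suc n choose Suc a) = Suc n * (n choose a)" by (rule Suc_times_binomial)
  have eq: "real ((N - Suc k) choose (A - Suc k)) * real (N - k) = real ((N - k) choose (A - k)) * real (A - k)"
  proof -
    have "N - Suc k = n" "A - Suc k = a" using a n by auto
    then show ?thesis using abs a n by (metis of_nat_mult mult.commute)
  qed
  have NA: "real (A - k) * real N \<le> real A * real (N - k)"
    using Suc.prems by (simp add: of_nat_diff algebra_simps mult_right_mono)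
  have pos: "real (N - k) > 0" using Suc.prems by simp
  have "real ((N - Suc k) choose (A - Suc k)) * real N ^ Suc k * real (N - k)
      = real ((N - k) choose (A - k)) * real N ^ k * (real (A - k) * real N)"
    using eq by (simp add: algebra_simps)
  also have "\<dots> \<le> real ((N - k) choose (A - k)) * real N ^ k * (real A * real (N - k))"
    by (intro mult_left_mono NA) auto
  also have "\<dots> \<le> real (N choose A) * real A ^ k * (real A * real (N - k))"
    by (intro mult_right_mono IH) auto
  also have "\<dots> = real (N choose A) * real A ^ Suc k * real (N - k)" by simp
  finally show ?case using pos by simp
qed

lemma card_FS_sup_le:
  assumes J: "J \<subseteq> {..<N}" and AN: "A \<le> N" and N: "N > 0"
  shows "real (card {T\<in>FS N A. J \<subseteq> T}) \<le> real (card (FS N A)) * (real A / real N) ^ card J"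
proof (cases "card J \<le> A")
  case True
  have "real (card {T\<in>FS N A. J \<subseteq> T}) * real N ^ card J \<le> real (card (FS N A)) * real A ^ card J"
    using card_FS_sup[OF J True] binom_ratio[OF True AN] card_FS by simp
  then show ?thesis using N by (simp add: power_divide field_simps)
next
  case False
  have "{T\<in>FS N A. J \<subseteq> T} = {}"
  proof safe
    fix T assume "T \<in> FS N A" "J \<subseteq> T"
    then have "card J \<le> card T" by (intro card_mono) (auto simp: FS_def intro: finite_subset)
    then show "T \<in> {}" using False \<open>T \<in> FS N A\<close> by (auto simp: FS_def)
  qed
  then have "card {T\<in>FS N A. J \<subseteq> T} = 0" by (simp only: card.empty)
  then show ?thesis by simp
qed

lemma pow_card_sum:
  fixes c :: real
  assumes "finite X"
  shows "(1 + c) ^ card X = (\<Sum>J\<in>Pow X. c ^ card J)"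
proof -
  have "(\<Prod>x\<in>X. c + 1) = (\<Sum>J\<in>Pow X. (\<Prod>x\<in>J. c) * (\<Prod>x\<in>X-J. 1))"
    by (rule prod_add[OF assms])
  then show ?thesis by (simp add: add.commute)
qed

lemma mgf_bound:
  fixes c :: real
  assumes c: "c \<ge> 0" and I: "I \<subseteq> {..<N}" and AN: "A \<le> N" and N: "N > 0"
  shows "(\<Sum>T\<in>FS N A. (1 + c) ^ card (T \<inter> I)) \<le> real (card (FS N A)) * (1 + c * (real A / real N)) ^ card I"
proof -
  have fI: "finite I" using I finite_subset by blast
  have "(\<Sum>T\<in>FS N A. (1 + c) ^ card (T \<inter> I)) = (\<Sum>T\<in>FS N A. \<Sum>J\<in>Pow I. if J \<subseteq> T then c ^ card J else 0)"
  proof (rule sum.cong[OF refl])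
    fix T
    have "(1 + c) ^ card (T \<inter> I) = (\<Sum>J\<in>Pow (T \<inter> I). c ^ card J)"
      using fI by (intro pow_card_sum) auto
    also have "Pow (T \<inter> I) = {J\<in>Pow I. J \<subseteq> T}" by auto
    also have "(\<Sum>J\<in>{J\<in>Pow I. J \<subseteq> T}. c ^ card J) = (\<Sum>J\<in>Pow I. if J \<subseteq> T then c ^ card J else 0)"
      using fI by (intro sum.inter_filter) auto
    finally show "(1 + c) ^ card (T \<inter> I) = (\<Sum>J\<in>Pow I. if J \<subseteq> T then c ^ card J else 0)" .
  qed
  also have "\<dots> = (\<Sum>J\<in>Pow I. \<Sum>T\<in>FS N A. if J \<subseteq> T then c ^ card J else 0)"
    by (rule sum.swap)
  also have "\<dots> = (\<Sum>J\<in>Pow I. c ^ card J * real (card {T\<in>FS N A. J \<subseteq> T}))"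
  proof (rule sum.cong[OF refl])
    fix J
    have "(\<Sum>T\<in>FS N A. if J \<subseteq> T then c ^ card J else 0) = (\<Sum>T\<in>{T\<in>FS N A. J \<subseteq> T}. c ^ card J)"
      using finite_FS by (intro sum.inter_filter[symmetric]) auto
    then show "(\<Sum>T\<in>FS N A. if J \<subseteq> T then c ^ card J else 0) = c ^ card J * real (card {T\<in>FS N A. J \<subseteq> T})"
      by simp
  qed
  also have "\<dots> \<le> (\<Sum>J\<in>Pow I. c ^ card J * (real (card (FS N A)) * (real A / real N) ^ card J))"
  proof (rule sum_mono)
    fix J assume "J \<in> Pow I"
    then have "J \<subseteq> {..<N}" using I by auto
    then show "c ^ card J * real (card {T\<in>FS N A. J \<subseteq> T}) \<le> c ^ card J * (real (card (FS N A)) * (real A / real N) ^ card J)"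
      using card_FS_sup_le[OF _ AN N] c by (intro mult_left_mono) auto
  qed
  also have "\<dots> = real (card (FS N A)) * (\<Sum>J\<in>Pow I. (c * (real A / real N)) ^ card J)"
    unfolding sum_distrib_left by (intro sum.cong refl) (simp add: power_mult_distrib power_divide)
  also have "\<dots> = real (card (FS N A)) * (1 + c * (real A / real N)) ^ card I"
    using pow_card_sum[OF fI] by simp
  finally show ?thesis .
qed

lemma upper_tail:
  assumes I: "I \<subseteq> {..<N}" and AN: "A \<le> N" and N: "N > 0" and s: "0 \<le> s" "s \<le> 2 * real N"
  shows "real (card {T\<in>FS N A. real (card (T \<inter> I)) \<ge> real (card I) * (real A / real N) + s})
    \<le> real (card (FS N A)) * exp (- s\<^sup>2 / (4 * real N))"
proof -
  define l where "l = s / (2 * real N)"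
  define p where "p = real A / real N"
  define k where "k = real (card I)"
  define c where "c = exp l - 1"
  have l0: "0 \<le> l" and l1: "l \<le> 1" using s N by (auto simp: l_def field_simps)
  have c0: "c \<ge> 0" using l0 by (simp add: c_def)
  have p0: "0 \<le> p" and p1: "p \<le> 1" using AN N by (auto simp: p_def field_simps)
  have fI: "finite I" using I finite_subset by blast
  have kN: "k \<le> real N" using card_mono[OF _ I] by (simp add: k_def)
  have k0: "0 \<le> k" by (simp add: k_def)
  let ?E = "{T\<in>FS N A. real (card (T \<inter> I)) \<ge> k * p + s}"
  have "real (card ?E) * exp (l * (k * p + s)) = (\<Sum>T\<in>?E. exp (l * (k * p + s)))" by simp
  also have "\<dots> \<le> (\<Sum>T\<in>?E. (1 + c) ^ card (T \<inter> I))"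
  proof (rule sum_mono)
    fix T assume "T \<in> ?E"
    then have "exp (l * (k * p + s)) \<le> exp (l * real (card (T \<inter> I)))"
      using l0 by (auto intro: mult_left_mono)
    also have "\<dots> = (1 + c) ^ card (T \<inter> I)" by (simp add: c_def exp_of_nat_mult[symmetric] mult.commute)
    finally show "exp (l * (k * p + s)) \<le> (1 + c) ^ card (T \<inter> I)" .
  qed
  also have "\<dots> \<le> (\<Sum>T\<in>FS N A. (1 + c) ^ card (T \<inter> I))"
    using finite_FS c0 by (intro sum_mono2) auto
  also have "\<dots> \<le> real (card (FS N A)) * (1 + c * p) ^ card I"
    unfolding p_def by (rule mgf_bound[OF c0 I AN N])
  also have "\<dots> \<le> real (card (FS N A)) * exp (c * p * k)"
  proof (rule mult_left_mono)
    have "(1 + c * p) ^ card I \<le> exp (c * p) ^ card I"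
      using c0 p0 by (intro power_mono) (auto simp: exp_ge_add_one_self add.commute)
    also have "\<dots> = exp (c * p * k)" by (simp add: k_def exp_of_nat_mult[symmetric] mult.commute)
    finally show "(1 + c * p) ^ card I \<le> exp (c * p * k)" .
  qed simp
  finally have main: "real (card ?E) * exp (l * (k * p + s)) \<le> real (card (FS N A)) * exp (c * p * k)" .
  have cl: "c \<le> l + l\<^sup>2" using exp_bound[OF l0 l1] by (simp add: c_def)
  have "c * p * k - l * (k * p + s) = (c - l) * (p * k) - l * s" by (simp add: algebra_simps)
  also have "\<dots> \<le> l\<^sup>2 * (p * k) - l * s"
    using cl p0 k0 by (intro diff_right_mono mult_right_mono) auto
  also have "\<dots> \<le> l\<^sup>2 * real N - l * s"
  proof -
    have "p * k \<le> 1 * real N" using p0 p1 k0 kN by (intro mult_mono) auto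
    then show ?thesis by (intro diff_right_mono mult_left_mono) auto
  qed
  also have "\<dots> = - s\<^sup>2 / (4 * real N)" using N by (simp add: l_def power2_eq_square field_simps)
  finally have ex: "c * p * k - l * (k * p + s) \<le> - s\<^sup>2 / (4 * real N)" .
  have "real (card ?E) = real (card ?E) * exp (l * (k * p + s)) * exp (- (l * (k * p + s)))"
    by (simp add: exp_minus)
  also have "\<dots> \<le> real (card (FS N A)) * exp (c * p * k) * exp (- (l * (k * p + s)))"
    using main by (intro mult_right_mono) auto
  also have "\<dots> = real (card (FS N A)) * exp (c * p * k - l * (k * p + s))"
    by (simp add: exp_diff exp_minus field_simps flip: exp_add)
  also have "\<dots> \<le> real (card (FS N A)) * exp (- s\<^sup>2 / (4 * real N))"
    using ex by (intro mult_left_mono) auto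
  finally show ?thesis by (simp add: k_def p_def mult.commute)
qed

lemma lower_tail:
  assumes I: "I \<subseteq> {..<N}" and AN: "A \<le> N" and N: "N > 0" and s: "0 \<le> s" "s \<le> 2 * real N"
  shows "real (card {T\<in>FS N A. real (card (T \<inter> I)) \<le> real (card I) * (real A / real N) - s})
    \<le> real (card (FS N A)) * exp (- s\<^sup>2 / (4 * real N))"
proof -
  let ?E = "{T\<in>FS N A. real (card (T \<inter> I)) \<le> real (card I) * (real A / real N) - s}"
  let ?E' = "{T\<in>FS N (N - A). real (card (T \<inter> I)) \<ge> real (card I) * (real (N - A) / real N) + s}"
  let ?f = "\<lambda>T. {..<N} - T"
  have fI: "finite I" using I finite_subset by blast
  have inj: "inj_on ?f ?E" by (rule inj_onI) (auto simp: FS_def)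
  have sub: "?f ` ?E \<subseteq> ?E'"
  proof safe
    fix T assume T: "T \<in> FS N A" "real (card (T \<inter> I)) \<le> real (card I) * (real A / real N) - s"
    have TN: "T \<subseteq> {..<N}" "card T = A" using T by (auto simp: FS_def)
    have fT: "finite T" using TN(1) finite_subset by blast
    show "{..<N} - T \<in> FS N (N - A)" using TN fT by (auto simp: FS_def card_Diff_subset)
    have "({..<N} - T) \<inter> I = I - (T \<inter> I)" using I by auto
    then have "card (({..<N} - T) \<inter> I) = card I - card (T \<inter> I)"
      using fI by (simp add: card_Diff_subset)
    moreover have "card (T \<inter> I) \<le> card I" using fI by (intro card_mono) auto
    ultimately have eq: "real (card (({..<N} - T) \<inter> I)) = real (card I) - real (card (T \<inter> I))"
      by simp
    have "real (N - A) / real N = 1 - real A / real N" using AN N by (simp add: of_nat_diff field_simps)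
    then have "real (card I) * (real (N - A) / real N) = real (card I) - real (card I) * (real A / real N)"
      by (simp only: right_diff_distrib mult_1_right)
    then show "real (card I) * (real (N - A) / real N) + s \<le> real (card (({..<N} - T) \<inter> I))"
      using eq T(2) by linarith
  qed
  have "card ?E = card (?f ` ?E)" using inj by (simp add: card_image)
  also have "\<dots> \<le> card ?E'" using sub by (intro card_mono) (auto intro: finite_subset[OF _ finite_FS])
  finally have "real (card ?E) \<le> real (card ?E')" by simp
  also have "\<dots> \<le> real (card (FS N (N - A))) * exp (- s\<^sup>2 / (4 * real N))"
    using upper_tail[OF I _ N s] by simp
  also have "card (FS N (N - A)) = card (FS N A)" using AN by (simp add: card_FS binomial_symmetric[symmetric])
  finally show ?thesis .
qed

definition ones :: "bool list \<Rightarrow> nat set" where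
  "ones xs = {i. i < length xs \<and> xs ! i}"

lemma card_ones: "card (ones xs) = length (filter id xs)"
  unfolding ones_def length_filter_conv_card by simp

lemma ones_map: "T \<subseteq> {..<n} \<Longrightarrow> ones (map (\<lambda>i. i \<in> T) [0..<n]) = T"
  unfolding ones_def by auto

lemma map_ones: "length xs = n \<Longrightarrow> map (\<lambda>i. i \<in> ones xs) [0..<n] = xs"
  by (rule nth_equalityI) (auto simp: ones_def)

lemma bij_ones: "bij_betw ones (strings A B) (FS (A + B) A)"
proof (rule bij_betw_byWitness[where f' = "\<lambda>T. map (\<lambda>i. i \<in> T) [0..<A+B]"])
  show "\<forall>a\<in>strings A B. map (\<lambda>i. i \<in> ones a) [0..<A + B] = a"
    using map_ones unfolding strings_def by (metis (mono_tags, lifting) mem_Collect_eq)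
  show "\<forall>a'\<in>FS (A + B) A. ones (map (\<lambda>i. i \<in> a') [0..<A + B]) = a'"
    using ones_map by (auto simp: FS_def)
  show "ones ` strings A B \<subseteq> FS (A + B) A"
  proof (rule image_subsetI)
    fix xs assume "xs \<in> strings A B"
    then have "length xs = A + B" "length (filter id xs) = A" by (auto simp: strings_def)
    moreover have "ones xs \<subseteq> {..<length xs}" by (auto simp: ones_def)
    ultimately show "ones xs \<in> FS (A + B) A" by (simp add: FS_def card_ones)
  qed
  show "(\<lambda>T. map (\<lambda>i. i \<in> T) [0..<A + B]) ` FS (A + B) A \<subseteq> strings A B"
  proof (rule image_subsetI)
    fix T assume T: "T \<in> FS (A + B) A"
    have TS: "T \<subseteq> {..<A+B}" "card T = A" using T unfolding FS_def by auto
    have o: "ones (map (\<lambda>i. i \<in> T) [0..<A + B]) = T" using TS(1) by (rule ones_map)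
    have "length (filter id (map (\<lambda>i. i \<in> T) [0..<A + B])) = A"
      using card_ones[of "map (\<lambda>i. i \<in> T) [0..<A + B]"] o TS(2) by metis
    moreover have "length (map (\<lambda>i. i \<in> T) [0..<A + B]) = A + B" by simp
    ultimately show "map (\<lambda>i. i \<in> T) [0..<A + B] \<in> strings A B"
      unfolding strings_def by blast
  qed
qed

lemma card_strings_pred:
  "card {xs\<in>strings A B. P (ones xs)} = card {T\<in>FS (A + B) A. P T}"
proof -
  have sur: "ones ` strings A B = FS (A + B) A" by (rule bij_betw_imp_surj_on[OF bij_ones])
  have gen: "ones ` {xs\<in>strings A B. P (ones xs)} = {T\<in>ones ` strings A B. P T}" by auto
  have im: "ones ` {xs\<in>strings A B. P (ones xs)} = {T\<in>FS (A + B) A. P T}"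
    unfolding gen sur ..
  have inj: "inj_on ones {xs\<in>strings A B. P (ones xs)}"
    using bij_betw_imp_inj_on[OF bij_ones[of A B]] by (rule inj_on_subset) auto
  have "card {xs\<in>strings A B. P (ones xs)} = card (ones ` {xs\<in>strings A B. P (ones xs)})"
    using inj by (rule card_image[symmetric])
  then show ?thesis unfolding im .
qed

lemma filter_nth_less:
  assumes K: "K < length (filter P [0..<n])" and m: "m \<le> n"
  shows "filter P [0..<n] ! K < m \<longleftrightarrow> K < length (filter P [0..<m])"
proof -
  have split: "[0..<n] = [0..<m] @ [m..<n]" using m upt_add_eq_append[of 0 m "n - m"] by simp
  show ?thesis
  proof (cases "K < length (filter P [0..<m])")
    case True
    then have "filter P [0..<n] ! K = filter P [0..<m] ! K" by (simp add: split nth_append)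
    moreover have "filter P [0..<m] ! K \<in> set (filter P [0..<m])" using True by (rule nth_mem)
    ultimately show ?thesis using True by auto
  next
    case False
    let ?j = "K - length (filter P [0..<m])"
    have "filter P [0..<n] ! K = filter P [m..<n] ! ?j" using False by (simp add: split nth_append)
    moreover have "?j < length (filter P [m..<n])" using K False by (simp add: split)
    then have "filter P [m..<n] ! ?j \<in> set (filter P [m..<n])" by (rule nth_mem)
    ultimately show ?thesis using False by auto
  qed
qed

lemma Mpos_facts:
  assumes xs: "xs \<in> strings A B" and AB: "B < A"
  shows "1 \<le> Mpos A B xs" "Mpos A B xs \<le> A + B"
    "m \<le> A + B \<Longrightarrow> Mpos A B xs \<le> m \<longleftrightarrow> (A + B) div 2 < card (ones xs \<inter> {..<m})"
proof -
  let ?P = "\<lambda>i. xs ! i"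
  have len: "length xs = A + B" using xs by (simp add: strings_def)
  have lf: "length (filter ?P [0..<A+B]) = A"
  proof -
    have "length (filter ?P [0..<A+B]) = card {i. i < A + B \<and> xs ! i}"
      unfolding length_filter_conv_card by (intro arg_cong[where f=card]) auto
    also have "\<dots> = card (ones xs)" by (simp add: ones_def len)
    finally show ?thesis using xs by (simp add: card_ones strings_def)
  qed
  have K: "(A + B) div 2 < length (filter ?P [0..<A+B])" using lf AB by simp
  have M: "Mpos A B xs = Suc (filter ?P [0..<A+B] ! ((A + B) div 2))"
    using AB K len by (simp add: Mpos_def one_positions_def)
  show "1 \<le> Mpos A B xs" using M by simp
  have "filter ?P [0..<A+B] ! ((A + B) div 2) \<in> set (filter ?P [0..<A+B])" using K by (rule nth_mem)
  then show "Mpos A B xs \<le> A + B" using M by auto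
  assume m: "m \<le> A + B"
  have "length (filter ?P [0..<m]) = card {i. i < m \<and> xs ! i}"
    unfolding length_filter_conv_card by (intro arg_cong[where f=card]) auto
  also have "{i. i < m \<and> xs ! i} = ones xs \<inter> {..<m}" using m len by (auto simp: ones_def)
  finally have "length (filter ?P [0..<m]) = card (ones xs \<inter> {..<m})" .
  then show "Mpos A B xs \<le> m \<longleftrightarrow> (A + B) div 2 < card (ones xs \<inter> {..<m})"
    using filter_nth_less[OF K m] M by (simp add: Suc_le_eq)
qed

lemma exp_tail_bound:
  fixes r s T :: real and N :: nat
  assumes N: "N > 0" and r: "1 \<le> r" and T: "T = 16 * sqrt (r * real N)" and s: "T / 4 \<le> s"
  shows "exp (- s\<^sup>2 / (4 * real N)) \<le> 2 powr (- r) / 2"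
proof -
  have T0: "0 \<le> T" using T r by simp
  have rN: "0 \<le> r * real N" using r by simp
  have "T\<^sup>2 = 16\<^sup>2 * (sqrt (r * real N))\<^sup>2" unfolding T by (rule power_mult_distrib)
  also have "(sqrt (r * real N))\<^sup>2 = r * real N" using rN by (rule real_sqrt_pow2)
  finally have "T\<^sup>2 = 256 * (r * real N)" by simp
  moreover have "(T / 4)\<^sup>2 \<le> s\<^sup>2" using s T0 by (intro power_mono) auto
  ultimately have "16 * (r * real N) \<le> s\<^sup>2" by (simp add: power_divide)
  then have "4 * r \<le> s\<^sup>2 / (4 * real N)" using N by (simp add: field_simps)
  then have "exp (- s\<^sup>2 / (4 * real N)) \<le> exp (- (4 * r))" by simp
  also have "\<dots> \<le> exp (- ((r + 1) * ln 2))"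
  proof -
    have "ln (2::real) < 2" using ln_less_self[of 2] by simp
    then have l2: "ln (2::real) \<le> 2" by (rule less_imp_le)
    have "(r + 1) * ln 2 \<le> (r + 1) * 2" using r l2 by (intro mult_left_mono) auto
    then show ?thesis using r by simp
  qed
  also have "\<dots> = 2 powr (- r) / 2"
  proof -
    have e1: "2 powr (- r) = exp (- r * ln 2)" by (simp add: powr_def)
    have e2: "exp (ln 2) = (2::real)" by simp
    have "- ((r + 1) * ln 2) = - r * ln 2 - ln (2::real)" by (simp add: algebra_simps)
    then have "exp (- ((r + 1) * ln 2)) = exp (- r * ln 2) / exp (ln 2)" by (simp only: exp_diff)
    then show ?thesis unfolding e1 e2 .
  qed
  finally show ?thesis .
qed

theorem mainTheorem9:
  shows "\<exists>d::real. \<forall>(A::nat) (B::nat) (r::real).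
    B \<le> A \<longrightarrow> 0 < A + B \<longrightarrow> 1 \<le> r \<longrightarrow>
    measure_pmf.prob (pmf_of_set (strings A B))
      {X. \<bar>real (Mpos A B X) - (real (A + B))\<^sup>2 / (2 * real A)\<bar> > d * sqrt (r * real (A + B))}
    \<le> 2 powr (- r)"
proof (intro exI[of _ 16] allI impI)
  fix A B :: nat and r :: real
  assume BA: "B \<le> A" and N0: "0 < A + B" and r: "1 \<le> r"
  define N where "N = A + B"
  define S where "S = strings A B"
  define E where "E = {X. \<bar>real (Mpos A B X) - (real (A + B))\<^sup>2 / (2 * real A)\<bar> > 16 * sqrt (r * real (A + B))}"
  have N: "N > 0" using N0 by (simp add: N_def)
  have cardS: "card S = card (FS N A)" unfolding S_def N_def by (rule bij_betw_same_card[OF bij_ones])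
  have cardFpos: "card (FS N A) > 0" using BA by (simp add: card_FS N_def)
  have finS: "finite S" using cardS cardFpos card_gt_0_iff by metis
  have neS: "S \<noteq> {}" using cardS cardFpos by auto
  have prob: "measure_pmf.prob (pmf_of_set S) E = card (S \<inter> E) / card S"
    using measure_pmf_of_set[OF neS finS] by simp
  have key: "real (card (S \<inter> E)) \<le> real (card S) * 2 powr (- r)"
  proof (cases "A = B")
    case True
    have "S \<inter> E = {}"
    proof -
      have "(real (A + B))\<^sup>2 / (2 * real A) = real (A + B)" using True N0
        by (simp add: power2_eq_square field_simps)
      moreover have "\<And>X. Mpos A B X = A + B" using True by (simp add: Mpos_def)
      moreover have "0 \<le> r * real (A + B)" using r by simp
      ultimately show ?thesis by (auto simp: E_def)
    qed
    then show ?thesis by simp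
  next
    case False
    then have AB: "B < A" using BA by simp
    define p where "p = real A / real N"
    define m0 where "m0 = (real N)\<^sup>2 / (2 * real A)"
    define T where "T = 16 * sqrt (r * real N)"
    define K where "K = N div 2"
    have A0: "real A > 0" using AB by simp
    have AN: "A \<le> N" unfolding N_def by simp
    have p12: "1 / 2 \<le> p" "p \<le> 1" using BA N by (auto simp: p_def N_def field_simps)
    have m0p: "m0 * p = real N / 2" using A0 N by (simp add: m0_def p_def power2_eq_square field_simps)
    have m0N: "m0 \<le> real N"
    proof -
      have "m0 = real N / (2 * p)" using A0 N by (simp add: m0_def p_def power2_eq_square field_simps)
      also have "\<dots> \<le> real N / 1" using p12 by (intro divide_left_mono) auto
      finally show ?thesis by simp
    qed
    have T16: "T \<ge> 16"
    proof -
      have N1: "1 \<le> real N" using N by simp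
      have "1 * 1 \<le> r * real N" using r N1 by (intro mult_mono) auto
      then have "1 \<le> sqrt (r * real N)" by simp
      then show ?thesis by (simp add: T_def)
    qed
    have K2: "2 * K \<le> N" "N < 2 * K + 2" unfolding K_def by presburger+
    have K2r: "2 * real K \<le> real N" "real N < 2 * real K + 2"
      using K2 by (simp_all only: of_nat_le_iff[symmetric] of_nat_less_iff[symmetric] of_nat_mult of_nat_add of_nat_numeral)
    have Kle: "real K \<le> real N / 2" using K2r by linarith
    have Kgt: "real N / 2 < real K + 1" using K2r by linarith
    have EX: "real (Mpos A B X) > m0 + T \<or> real (Mpos A B X) < m0 - T" if "X \<in> E" for X
    proof -
      have "\<bar>real (Mpos A B X) - m0\<bar> > T" using that unfolding E_def m0_def T_def N_def by simp
      then show ?thesis by arith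
    qed
    have EE: "S \<inter> E \<subseteq> {X\<in>S. real (Mpos A B X) > m0 + T} \<union> {X\<in>S. real (Mpos A B X) < m0 - T}"
      using EX by blast
    have bnd: "exp (- s\<^sup>2 / (4 * real N)) \<le> 2 powr (- r) / 2" if "T / 4 \<le> s" for s
      using exp_tail_bound[OF N r T_def that] .
    have E1: "real (card {X\<in>S. real (Mpos A B X) > m0 + T}) \<le> real (card S) * (2 powr (- r) / 2)"
    proof (cases "m0 + T \<ge> real N")
      case True
      have "{X\<in>S. real (Mpos A B X) > m0 + T} = {}"
      proof safe
        fix X assume "X \<in> S" "real (Mpos A B X) > m0 + T"
        moreover have "Mpos A B X \<le> N" using Mpos_facts(2)[OF _ AB] \<open>X \<in> S\<close> unfolding S_def N_def by blast
        then have "real (Mpos A B X) \<le> real N" by simp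
        ultimately show "X \<in> {}" using True by linarith
      qed
      then have "card {X\<in>S. real (Mpos A B X) > m0 + T} = 0" by (simp only: card.empty)
      then show ?thesis by simp
    next
      case False
      define m where "m = nat \<lfloor>m0 + T\<rfloor>"
      have "0 \<le> m0" unfolding m0_def by simp
      then have m0T: "0 \<le> m0 + T" using T16 by linarith
      have fl: "0 \<le> \<lfloor>m0 + T\<rfloor>" using m0T by simp
      have rm: "real m = real_of_int \<lfloor>m0 + T\<rfloor>" unfolding m_def using fl by simp
      have fc: "real_of_int \<lfloor>m0 + T\<rfloor> \<le> m0 + T" "m0 + T < real_of_int (\<lfloor>m0 + T\<rfloor> + 1)"
        using floor_correct[of "m0 + T"] by auto
      have mr: "real m \<le> m0 + T" "m0 + T - 1 < real m" using rm fc by auto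
      have "real m < real N" using mr False by linarith
      then have mN: "m \<le> N" by simp
      define s where "s = (T - 1) / 2"
      have s0a: "0 \<le> s" using T16 unfolding s_def by simp
      have "T \<le> real N" using False \<open>0 \<le> m0\<close> by linarith
      then have s0b: "s \<le> 2 * real N" unfolding s_def by simp
      note s0 = s0a s0b
      have "(m0 + T - 1) * p \<le> real m * p" using mr p12 by (intro mult_right_mono) auto
      moreover have "(m0 + T - 1) * p = real N / 2 + (T - 1) * p" using m0p by (simp add: algebra_simps)
      moreover have "(T - 1) * (1/2) \<le> (T - 1) * p" using p12 T16 by (intro mult_left_mono) auto
      ultimately have mp: "real N / 2 + s \<le> real m * p" unfolding s_def by linarith
      have "{X\<in>S. real (Mpos A B X) > m0 + T} \<subseteq> {X\<in>S. (\<lambda>U. real (card (U \<inter> {..<m})) \<le> real (card {..<m}) * (real A / real N) - s) (ones X)}"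
      proof safe
        fix X assume X: "X \<in> S" "real (Mpos A B X) > m0 + T"
        then have "real m < real (Mpos A B X)" using mr by linarith
        then have nle: "\<not> Mpos A B X \<le> m" by simp
        have XS: "X \<in> strings A B" using X(1) unfolding S_def .
        have mAB: "m \<le> A + B" using mN unfolding N_def .
        have "\<not> (A + B) div 2 < card (ones X \<inter> {..<m})" using Mpos_facts(3)[OF XS AB mAB] nle by blast
        then have "card (ones X \<inter> {..<m}) \<le> K" unfolding K_def N_def by simp
        then have c1: "real (card (ones X \<inter> {..<m})) \<le> real K" by simp
        have c2: "real (card {..<m}) * (real A / real N) = real m * p" by (simp add: p_def)
        show "real (card (ones X \<inter> {..<m})) \<le> real (card {..<m}) * (real A / real N) - s"
          using c1 c2 Kle mp by linarith
      qed
      then have "card {X\<in>S. real (Mpos A B X) > m0 + T} \<le> card {X\<in>S. (\<lambda>U. real (card (U \<inter> {..<m})) \<le> real (card {..<m}) * (real A / real N) - s) (ones X)}"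
        using finS by (intro card_mono) auto
      also have "\<dots> = card {U\<in>FS N A. real (card (U \<inter> {..<m})) \<le> real (card {..<m}) * (real A / real N) - s}"
        unfolding S_def N_def by (rule card_strings_pred)
      finally have "real (card {X\<in>S. real (Mpos A B X) > m0 + T}) \<le> real (card {U\<in>FS N A. real (card (U \<inter> {..<m})) \<le> real (card {..<m}) * (real A / real N) - s})"
        by (simp only: of_nat_le_iff)
      also have "\<dots> \<le> real (card (FS N A)) * exp (- s\<^sup>2 / (4 * real N))"
        by (rule lower_tail[OF _ AN N s0a s0b]) (use mN in auto)
      also have "\<dots> \<le> real (card S) * (2 powr (- r) / 2)"
      proof -
        have "T / 4 \<le> s" using T16 unfolding s_def by (simp add: field_simps)
        then have "exp (- s\<^sup>2 / (4 * real N)) \<le> 2 powr (- r) / 2" by (rule bnd)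
        then show ?thesis unfolding cardS by (rule mult_left_mono) simp
      qed
      finally show ?thesis .
    qed
    have E2: "real (card {X\<in>S. real (Mpos A B X) < m0 - T}) \<le> real (card S) * (2 powr (- r) / 2)"
    proof (cases "m0 - T < 0")
      case True
      have "{X\<in>S. real (Mpos A B X) < m0 - T} = {}"
      proof safe
        fix X assume "X \<in> S" "real (Mpos A B X) < m0 - T"
        moreover have "0 \<le> real (Mpos A B X)" by simp
        ultimately show "X \<in> {}" using True by linarith
      qed
      then have "card {X\<in>S. real (Mpos A B X) < m0 - T} = 0" by (simp only: card.empty)
      then show ?thesis by simp
    next
      case False
      define c where "c = \<lceil>m0 - T\<rceil>"
      define m where "m = nat (c - 1)"
      have cc: "real_of_int c - 1 < m0 - T" "m0 - T \<le> real_of_int c"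
        using ceiling_correct[of "m0 - T"] unfolding c_def by auto
      have c0: "0 \<le> c" using False unfolding c_def by simp
      have mr: "real m \<le> m0 - T"
      proof (cases "1 \<le> c")
        case True
        then have "int m = c - 1" unfolding m_def by simp
        then have "real m = real_of_int c - 1" by (metis of_int_of_nat_eq of_int_diff of_int_1)
        then show ?thesis using cc by linarith
      next
        case False
        then have "m = 0" unfolding m_def by simp
        then show ?thesis using \<open>\<not> m0 - T < 0\<close> by simp
      qed
      have "real m < real N" using mr m0N T16 by linarith
      then have mN: "m \<le> N" by simp
      define s where "s = T / 2"
      have s0a: "0 \<le> s" using T16 unfolding s_def by simp
      have "T \<le> real N" using False m0N by linarith
      then have s0b: "s \<le> 2 * real N" unfolding s_def by simp
      note s0 = s0a s0b
      have "real m * p \<le> (m0 - T) * p" using mr p12 by (intro mult_right_mono) auto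
      moreover have "(m0 - T) * p = real N / 2 - T * p" using m0p by (simp add: algebra_simps)
      moreover have "T * (1/2) \<le> T * p" using p12 T16 by (intro mult_left_mono) auto
      ultimately have mp: "real m * p + s \<le> real N / 2" unfolding s_def by linarith
      have "{X\<in>S. real (Mpos A B X) < m0 - T} \<subseteq> {X\<in>S. (\<lambda>U. real (card (U \<inter> {..<m})) \<ge> real (card {..<m}) * (real A / real N) + s) (ones X)}"
      proof safe
        fix X assume X: "X \<in> S" "real (Mpos A B X) < m0 - T"
        have "real_of_int (int (Mpos A B X)) < real_of_int c" using X(2) cc by simp
        then have "int (Mpos A B X) < c" by (simp only: of_int_less_iff)
        then have "int (Mpos A B X) \<le> c - 1" by simp
        then have le: "Mpos A B X \<le> m" unfolding m_def using c0 by (simp add: le_nat_iff)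
        have XS: "X \<in> strings A B" using X(1) unfolding S_def .
        have mAB: "m \<le> A + B" using mN unfolding N_def .
        have "(A + B) div 2 < card (ones X \<inter> {..<m})" using Mpos_facts(3)[OF XS AB mAB] le by blast
        then have "K + 1 \<le> card (ones X \<inter> {..<m})" unfolding K_def N_def by simp
        then have c1: "real K + 1 \<le> real (card (ones X \<inter> {..<m}))" by simp
        have c2: "real (card {..<m}) * (real A / real N) = real m * p" by (simp add: p_def)
        show "real (card {..<m}) * (real A / real N) + s \<le> real (card (ones X \<inter> {..<m}))"
          using c1 c2 Kgt mp by linarith
      qed
      then have "card {X\<in>S. real (Mpos A B X) < m0 - T} \<le> card {X\<in>S. (\<lambda>U. real (card (U \<inter> {..<m})) \<ge> real (card {..<m}) * (real A / real N) + s) (ones X)}"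
        using finS by (intro card_mono) auto
      also have "\<dots> = card {U\<in>FS N A. real (card (U \<inter> {..<m})) \<ge> real (card {..<m}) * (real A / real N) + s}"
        unfolding S_def N_def by (rule card_strings_pred)
      finally have "real (card {X\<in>S. real (Mpos A B X) < m0 - T}) \<le> real (card {U\<in>FS N A. real (card (U \<inter> {..<m})) \<ge> real (card {..<m}) * (real A / real N) + s})"
        by (simp only: of_nat_le_iff)
      also have "\<dots> \<le> real (card (FS N A)) * exp (- s\<^sup>2 / (4 * real N))"
        by (rule upper_tail[OF _ AN N s0a s0b]) (use mN in auto)
      also have "\<dots> \<le> real (card S) * (2 powr (- r) / 2)"
      proof -
        have "T / 4 \<le> s" using T16 unfolding s_def by (simp add: field_simps)
        then have "exp (- s\<^sup>2 / (4 * real N)) \<le> 2 powr (- r) / 2" by (rule bnd)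
        then show ?thesis unfolding cardS by (rule mult_left_mono) simp
      qed
      finally show ?thesis .
    qed
    have "card (S \<inter> E) \<le> card ({X\<in>S. real (Mpos A B X) > m0 + T} \<union> {X\<in>S. real (Mpos A B X) < m0 - T})"
      using EE finS by (intro card_mono) auto
    also have "\<dots> \<le> card {X\<in>S. real (Mpos A B X) > m0 + T} + card {X\<in>S. real (Mpos A B X) < m0 - T}"
      by (rule card_Un_le)
    finally have "real (card (S \<inter> E)) \<le> real (card {X\<in>S. real (Mpos A B X) > m0 + T}) + real (card {X\<in>S. real (Mpos A B X) < m0 - T})"
      by linarith
    then show ?thesis using E1 E2 by simp
  qed
  have "measure_pmf.prob (pmf_of_set S) E \<le> 2 powr (- r)"
    using key prob cardS cardFpos by (simp add: divide_le_eq mult.commute)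
  then show "measure_pmf.prob (pmf_of_set (strings A B))
      {X. \<bar>real (Mpos A B X) - (real (A + B))\<^sup>2 / (2 * real A)\<bar> > 16 * sqrt (r * real (A + B))}
    \<le> 2 powr (- r)" by (simp add: S_def E_def)
qed

end
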